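(* Let $p$ be a singular point of $\varphi$ with data $(a,b)$, $U_p$ a disc neighbourhood of $p$ with parameter $s$, and $(z,w)$ coordinates on $X$ as in the context. Let $\varphi_k$ be a $k$-th order deformation of $\varphi$ whose restriction to $U_p\times\mathrm{Spec}\,\mathbb C[t]/t^{k+1}$ is $(z,w)=(s^a+\sum_{j=1}^k\sum_{i=0}^{a-2}t^jc_{a-i,j}s^i,\ s^b+s^{b+1}g_0(s)+\sum_{j=1}^kt^jg_j(s))$. Then the set of equivalence classes of $(k+1)$-th order analytic deformations of $\varphi$ on $U_p$ reducing to $\varphi_k|_{U_p}$ is naturally in bijection with the set of sections over $U_p$ of the sheaf $\mathcal O_{U_p}\cdot\partial_w\oplus i_*V_p\cdot\partial_z$, the bijection sending the deformation $(z,w)=(s^a+\sum_{j=1}^{k+1}\sum_{i=0}^{a-2}t^jc_{a-i,j}s^i,\ s^b+s^{b+1}g_0(s)+\sum_{j=1}^{k+1}t^jg_j(s))$ to $g_{k+1}(s)\partial_w+(\sum_{i=0}^{a-2}c_{a-i,k+1}s^i)\partial_z$.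
   Context: $\varphi\colon C\to X$ is a holomorphic map from a complete integral curve to a smooth complex surface, and $p$ is a smooth point of $C$ where $d\varphi=0$, with local parameter $s$ on a disc neighbourhood $U_p$ and coordinates $(z,w)$ on $X$ centered at $\varphi(p)$ such that $\varphi=(s^a,s^b+s^{b+1}g_0(s))$, $2\le a<b$, $a\nmid b$, $g_0$ convergent; $c_{a-i,j}\in\mathbb C$ and $g_j$ are holomorphic on $U_p$. Two $(k+1)$-th order local deformations on $U_p$ reducing to $\varphi_k|_{U_p}$ are equivalent if they differ by precomposition with an automorphism of the ringed space $U_p\times\mathrm{Spec}\,\mathbb C[t]/t^{k+2}$ which is the identity over $\mathbb C[t]/t^{k+1}$. $V_p=\{c_a+c_{a-1}s+\cdots+c_2s^{a-2}: c_i\in\mathbb C\}$ is regarded as a constant sheaf on the point $p$, $i\colon\{p\}\to U_p$ the inclusion, and $\partial_z,\partial_w$ are the pullbacks by $\varphi$ of the coordinate vector fields. *)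

theory Defs
  imports "HOL-Complex_Analysis.Complex_Analysis" "HOL-Computational_Algebra.Polynomial"
begin

text \<open>A local deformation of order N on U (over C[t]/t^(N+1)) is a pair (Z,W) of
  families of holomorphic functions; Z j is the coefficient of t^j.\<close>

type_synonym tfam = "nat \<Rightarrow> complex \<Rightarrow> complex"

text \<open>Precomposition of sum_j t^j G_j(s) with the automorphism s |-> s + t^N h(s)
  (identity modulo t^N): coefficient of t^n of sum_j t^j G_j(s + t^N h(s)),
  expanded by Taylor's formula (exact since t is nilpotent).\<close>
definition tcomp :: "nat \<Rightarrow> (complex \<Rightarrow> complex) \<Rightarrow> tfam \<Rightarrow> tfam" where
  "tcomp N h G n s =
     (\<Sum>j\<le>n. \<Sum>m\<le>n. if j + N * m = n then h s ^ m * (deriv ^^ m) (G j) s / fact m else 0)"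

definition local_defs :: "complex set \<Rightarrow> nat \<Rightarrow> tfam \<Rightarrow> tfam \<Rightarrow> (tfam \<times> tfam) set" where
  "local_defs U k Zk Wk =
     {(Z, W). (\<forall>j\<le>Suc k. Z j holomorphic_on U \<and> W j holomorphic_on U)
            \<and> (\<forall>j\<le>k. \<forall>s\<in>U. Z j s = Zk j s \<and> W j s = Wk j s)
            \<and> (\<forall>j>Suc k. Z j = (\<lambda>_. 0) \<and> W j = (\<lambda>_. 0))}"

text \<open>Two such deformations are equivalent if they differ by precomposition with an
  automorphism of U x Spec C[t]/t^(k+2) which is the identity over C[t]/t^(k+1),
  i.e. s |-> s + t^(k+1) h(s) with h holomorphic on U.\<close>
definition def_equiv :: "complex set \<Rightarrow> nat \<Rightarrow> tfam \<Rightarrow> tfam \<Rightarrow> ((tfam \<times> tfam) \<times> (tfam \<times> tfam)) set" where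
  "def_equiv U k Zk Wk =
     {(D1, D2). D1 \<in> local_defs U k Zk Wk \<and> D2 \<in> local_defs U k Zk Wk \<and>
        (\<exists>h. h holomorphic_on U \<and>
           (\<forall>n\<le>Suc k. \<forall>s\<in>U. tcomp (Suc k) h (fst D1) n s = fst D2 n s
                            \<and> tcomp (Suc k) h (snd D1) n s = snd D2 n s))}"

text \<open>Sections over U of O_U d_w (+) i_* V_p d_z: a holomorphic function on U
  (normalised to 0 off U) and a polynomial of degree at most a-2.\<close>
definition sections :: "complex set \<Rightarrow> nat \<Rightarrow> ((complex \<Rightarrow> complex) \<times> complex poly) set" where
  "sections U a = {(g, q). g holomorphic_on U \<and> (\<forall>s. s \<notin> U \<longrightarrow> g s = 0) \<and> degree q \<le> a - 2}"

end

theory Submission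
  imports Defs
begin

lemma tcomp_low:
  assumes "n \<le> Suc k"
  shows "tcomp (Suc k) h G n s = G n s + (if n = Suc k then h s * deriv (G 0) s else 0)"
proof -
  have eq: "(if j + Suc k * m = n then h s ^ m * (deriv ^^ m) (G j) s / fact m else 0) =
     (if j = n then (if m = 0 then G j s else 0) else 0) +
     (if j = 0 then (if m = 1 then (if n = Suc k then h s * deriv (G 0) s else 0) else 0) else 0)"
    if "j \<le> n" "m \<le> n" for j m
  proof (cases "m = 0")
    case True thus ?thesis by auto
  next
    case False
    show ?thesis
    proof (cases "m = 1")
      case True thus ?thesis using assms by auto
    next
      case False
      with \<open>m \<noteq> 0\<close> have "m \<ge> 2" by auto
      hence "Suc k * m \<ge> Suc k * 2" by (rule mult_le_mono2)
      moreover have "Suc k * 2 = 2 * k + 2" by simp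
      ultimately have "j + Suc k * m \<noteq> n" using assms by linarith
      thus ?thesis using \<open>m \<noteq> 0\<close> False assms by auto
    qed
  qed
  have "tcomp (Suc k) h G n s = (\<Sum>j\<le>n. \<Sum>m\<le>n.
     (if j = n then (if m = 0 then G j s else 0) else 0) +
     (if j = 0 then (if m = 1 then (if n = Suc k then h s * deriv (G 0) s else 0) else 0) else 0))"
    unfolding tcomp_def by (intro sum.cong refl eq) auto
  also have "\<dots> = (\<Sum>j\<le>n. \<Sum>m\<le>n.
     (if j = n then (if m = 0 then G j s else 0) else 0)) + (\<Sum>j\<le>n. \<Sum>m\<le>n.
     (if j = 0 then (if m = 1 then (if n = Suc k then h s * deriv (G 0) s else 0) else 0) else 0))"
    by (simp only: sum.distrib)
  also have "(\<Sum>j\<le>n. \<Sum>m\<le>n.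
     (if j = n then (if m = 0 then G j s else 0) else 0)) = G n s"
  proof -
    have "\<And>j. (\<Sum>m\<le>n. if j = n then if m = 0 then G j s else 0 else 0) = (if j = n then G n s else 0)"
      by auto
    thus ?thesis by simp
  qed
  also have "(\<Sum>j\<le>n. \<Sum>m\<le>n.
     (if j = 0 then (if m = 1 then (if n = Suc k then h s * deriv (G 0) s else 0) else 0) else 0))
     = (if n = Suc k then h s * deriv (G 0) s else 0)"
  proof (cases "n = Suc k")
    case True
    have inner: "\<And>j. (\<Sum>m\<le>n. if j = 0 then if m = 1 then (if n = Suc k then h s * deriv (G 0) s else 0) else 0 else 0)
      = (if j = 0 then h s * deriv (G 0) s else 0)" using True by auto
    show ?thesis by (simp only: inner) (simp add: True)
  next
    case False
    have "(\<Sum>j\<le>n. \<Sum>m\<le>n. (if j = 0 then (if m = 1 then (if n = Suc k then h s * deriv (G 0) s else 0) else 0) else 0)) = 0"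
      by (intro sum.neutral ballI) (simp add: False)
    with False show ?thesis by simp
  qed
  finally show ?thesis .
qed

lemma split_taylor:
  fixes f :: "complex \<Rightarrow> complex"
  assumes "f holomorphic_on ball 0 r" "r > 0"
  shows "\<exists>q u. (\<forall>i\<ge>n. coeff q i = 0) \<and> u holomorphic_on ball 0 r \<and>
           (\<forall>s\<in>ball 0 r. f s = poly q s + s ^ n * u s)"
proof (induction n)
  case 0
  show ?case by (rule exI[of _ 0], rule exI[of _ f]) (use assms in auto)
next
  case (Suc n)
  then obtain q u where q: "\<forall>i\<ge>n. coeff q i = 0" and u: "u holomorphic_on ball 0 r"
    and e: "\<forall>s\<in>ball 0 r. f s = poly q s + s ^ n * u s" by blast
  define v where "v = (\<lambda>z. if z = 0 then deriv u 0 else (u z - u 0) / (z - 0))"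
  have v: "v holomorphic_on ball 0 r" unfolding v_def
    by (rule pole_lemma[OF u]) (use assms in auto)
  have uv: "u s = u 0 + s * v s" for s by (simp add: v_def)
  show ?case
  proof (intro exI conjI)
    show "\<forall>i\<ge>Suc n. coeff (q + monom (u 0) n) i = 0" using q by (auto simp: coeff_monom)
    show "v holomorphic_on ball 0 r" by (rule v)
    show "\<forall>s\<in>ball 0 r. f s = poly (q + monom (u 0) n) s + s ^ Suc n * v s"
      proof
      fix s :: complex assume "s \<in> ball 0 r"
      thus "f s = poly (q + monom (u 0) n) s + s ^ Suc n * v s"
        using e uv[of s] by (simp add: poly_monom algebra_simps)
    qed
  qed
qed

lemma eq_at0:
  fixes f g :: "complex \<Rightarrow> complex"
  assumes "continuous_on (ball 0 r) f" "continuous_on (ball 0 r) g" "r > 0"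
    and "\<forall>s\<in>ball 0 r. s \<noteq> 0 \<longrightarrow> f s = g s"
  shows "f 0 = g 0"
proof -
  have o: "0 \<in> ball (0::complex) r" using assms(3) by simp
  have f: "(f \<longlongrightarrow> f 0) (at 0)"
    using assms(1) o by (metis continuous_on_eq_continuous_at open_ball isCont_def)
  have g: "(g \<longlongrightarrow> g 0) (at 0)"
    using assms(2) o by (metis continuous_on_eq_continuous_at open_ball isCont_def)
  have ev: "eventually (\<lambda>s. f s = g s) (at 0)"
    unfolding eventually_at using assms(3,4) by (intro exI[of _ r]) (auto simp: dist_commute)
  have "(g \<longlongrightarrow> f 0) (at 0)" using tendsto_cong[OF ev] f by simp
  thus ?thesis using g by (intro tendsto_unique[OF _ _ g]) auto
qed

lemma coeff_vanish:
  fixes p :: "complex poly"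
  assumes "r > 0" "continuous_on (ball 0 r) u"
    and "\<forall>s\<in>ball 0 r. poly p s = s ^ n * u s"
  shows "\<forall>i<n. coeff p i = 0"
  using assms(3)
proof (induction n arbitrary: p)
  case 0 thus ?case by simp
next
  case (Suc n)
  obtain c p' where pc: "p = pCons c p'" by (cases p)
  have o: "0 \<in> ball (0::complex) r" using assms(1) by simp
  have "c = 0" using Suc.prems o pc by (metis poly_0_coeff_0 coeff_pCons_0 mult_zero_left power_0_Suc zero_less_Suc power_eq_0_iff mult_eq_0_iff)
  have ne: "\<forall>s\<in>ball 0 r. s \<noteq> 0 \<longrightarrow> poly p' s = s ^ n * u s"
  proof (intro ballI impI)
    fix s :: complex assume "s \<in> ball 0 r" "s \<noteq> 0"
    hence "poly p s = s ^ Suc n * u s" using Suc.prems by blast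
    hence "s * poly p' s = s * (s ^ n * u s)" by (simp add: pc \<open>c = 0\<close>)
    thus "poly p' s = s ^ n * u s" using \<open>s \<noteq> 0\<close> by simp
  qed
  have "poly p' 0 = 0 ^ n * u 0"
  proof (rule eq_at0[of r "poly p'" "\<lambda>s. s ^ n * u s"])
    show "continuous_on (ball 0 r) (poly p')" by (intro continuous_intros)
    show "continuous_on (ball 0 r) (\<lambda>s. s ^ n * u s)" using assms(2) by (intro continuous_intros)
  qed (use ne assms(1) in auto)
  hence "\<forall>s\<in>ball 0 r. poly p' s = s ^ n * u s"
  proof (intro ballI)
    fix s :: complex assume s: "s \<in> ball 0 r" "poly p' 0 = 0 ^ n * u 0"
    show "poly p' s = s ^ n * u s"
    proof (cases "s = 0")
      case True thus ?thesis using s by simp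
    next
      case False thus ?thesis using s ne by blast
    qed
  qed
  from Suc.IH[OF this] have "\<forall>i<n. coeff p' i = 0" .
  thus ?case by (auto simp: pc \<open>c = 0\<close> coeff_pCons split: nat.split)
qed


theorem mainTheorem6:
  fixes a b k :: nat and r :: real
    and g0 :: "complex \<Rightarrow> complex" and g :: "nat \<Rightarrow> complex \<Rightarrow> complex"
    and c :: "nat \<Rightarrow> nat \<Rightarrow> complex"
    and Zk Wk :: tfam
  assumes "r > 0"
    and "2 \<le> a" and "a < b" and "\<not> a dvd b"
    and "g0 holomorphic_on ball 0 r"
    and "\<forall>j. 1 \<le> j \<and> j \<le> k \<longrightarrow> g j holomorphic_on ball 0 r"
    and "Zk = (\<lambda>j s. if j = 0 then s ^ a
                     else if j \<le> k then (\<Sum>i\<le>a - 2. c (a - i) j * s ^ i) else 0)"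
    and "Wk = (\<lambda>j s. if j = 0 then s ^ b + s ^ (b + 1) * g0 s
                     else if j \<le> k then g j s else 0)"
  shows "equiv (local_defs (ball 0 r) k Zk Wk) (def_equiv (ball 0 r) k Zk Wk) \<and>
         bij_betw
           (\<lambda>(gk1, q). def_equiv (ball 0 r) k Zk Wk ``
               {((\<lambda>j. if j = Suc k then poly q else Zk j),
                 (\<lambda>j. if j = Suc k then gk1 else Wk j))})
           (sections (ball 0 r) a)
           (local_defs (ball 0 r) k Zk Wk // def_equiv (ball 0 r) k Zk Wk)"
proof -
  define U where "U = ball (0::complex) r"
  define A where "A = local_defs U k Zk Wk"
  define R where "R = def_equiv U k Zk Wk"
  define dz where "dz = deriv (Zk 0)"
  define dw where "dw = deriv (Wk 0)"
  have oU: "open U" by (simp add: U_def)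
  have Z0: "Zk 0 = (\<lambda>s. s ^ a)" using assms(7) by simp
  have W0: "Wk 0 = (\<lambda>s. s ^ b + s ^ (b + 1) * g0 s)" using assms(8) by simp
  have W0h: "Wk 0 holomorphic_on U" unfolding W0 U_def using assms(5) by (intro holomorphic_intros)
  have dwh: "dw holomorphic_on U" unfolding dw_def by (rule holomorphic_deriv[OF W0h oU])
  have dzv: "dz s = of_nat a * s ^ (a - 1)" for s
    unfolding dz_def Z0 by (rule DERIV_imp_deriv) (auto intro!: derivative_eq_intros)
  have Zkh: "Zk j holomorphic_on U" if "j \<le> k" for j
  proof (cases "j = 0")
    case True thus ?thesis by (simp add: Z0 holomorphic_intros)
  next
    case False
    hence "Zk j = (\<lambda>s. \<Sum>i\<le>a - 2. c (a - i) j * s ^ i)" using that assms(7) by simp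
    thus ?thesis by (simp add: holomorphic_intros)
  qed
  have Wkh: "Wk j holomorphic_on U" if "j \<le> k" for j
  proof (cases "j = 0")
    case True thus ?thesis using W0h by simp
  next
    case False
    hence "Wk j = g j" using that assms(8) by simp
    thus ?thesis using assms(6) that False U_def by simp
  qed
  have Zk0: "Zk j = (\<lambda>_. 0)" "Wk j = (\<lambda>_. 0)" if "j > k" for j
    using that assms(7,8) by auto
  have der: "deriv (fst D 0) s = dz s \<and> deriv (snd D 0) s = dw s" if "D \<in> A" "s \<in> U" for D s
  proof -
    have e: "\<forall>x\<in>U. fst D 0 x = Zk 0 x \<and> snd D 0 x = Wk 0 x"
      using that(1) unfolding A_def local_defs_def by auto
    have ev: "eventually (\<lambda>x. x \<in> U) (nhds s)" using oU that(2) by (rule eventually_nhds_in_open)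
    show ?thesis unfolding dz_def dw_def
      by (intro conjI deriv_cong_ev refl; rule eventually_mono[OF ev]) (use e in auto)
  qed
  have tc: "tcomp (Suc k) h (fst D) n s = fst D n s + (if n = Suc k then h s * dz s else 0) \<and>
            tcomp (Suc k) h (snd D) n s = snd D n s + (if n = Suc k then h s * dw s else 0)"
    if "D \<in> A" "s \<in> U" "n \<le> Suc k" for D s n h
    using tcomp_low[OF that(3)] der[OF that(1,2)] by simp
  have char: "(D1, D2) \<in> R \<longleftrightarrow> (\<exists>h. h holomorphic_on U \<and> (\<forall>s\<in>U.
       fst D2 (Suc k) s = fst D1 (Suc k) s + h s * dz s \<and>
       snd D2 (Suc k) s = snd D1 (Suc k) s + h s * dw s))"
    if "D1 \<in> A" "D2 \<in> A" for D1 D2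
  proof
    assume "(D1, D2) \<in> R"
    then obtain h where h: "h holomorphic_on U" and
      e: "\<forall>n\<le>Suc k. \<forall>s\<in>U. tcomp (Suc k) h (fst D1) n s = fst D2 n s
                            \<and> tcomp (Suc k) h (snd D1) n s = snd D2 n s"
      unfolding R_def def_equiv_def U_def A_def by auto
    show "\<exists>h. h holomorphic_on U \<and> (\<forall>s\<in>U.
       fst D2 (Suc k) s = fst D1 (Suc k) s + h s * dz s \<and>
       snd D2 (Suc k) s = snd D1 (Suc k) s + h s * dw s)"
      using h e tc[OF that(1) _ order_refl] by (intro exI[of _ h]) auto
  next
    assume "\<exists>h. h holomorphic_on U \<and> (\<forall>s\<in>U.
       fst D2 (Suc k) s = fst D1 (Suc k) s + h s * dz s \<and>
       snd D2 (Suc k) s = snd D1 (Suc k) s + h s * dw s)"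
    then obtain h where h: "h holomorphic_on U" and e: "\<forall>s\<in>U.
       fst D2 (Suc k) s = fst D1 (Suc k) s + h s * dz s \<and>
       snd D2 (Suc k) s = snd D1 (Suc k) s + h s * dw s" by blast
    have lo: "fst D1 n s = fst D2 n s \<and> snd D1 n s = snd D2 n s" if "n \<le> k" "s \<in> U" for n s
      using \<open>D1 \<in> A\<close> \<open>D2 \<in> A\<close> that unfolding A_def local_defs_def by auto
    have "\<forall>n\<le>Suc k. \<forall>s\<in>U. tcomp (Suc k) h (fst D1) n s = fst D2 n s
                            \<and> tcomp (Suc k) h (snd D1) n s = snd D2 n s"
    proof (intro allI impI ballI)
      fix n s assume n: "n \<le> Suc k" and s: "s \<in> U"
      show "tcomp (Suc k) h (fst D1) n s = fst D2 n s \<and> tcomp (Suc k) h (snd D1) n s = snd D2 n s"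
      proof (cases "n = Suc k")
        case True thus ?thesis using tc[OF that(1) s n, of h] e s by simp
      next
        case False thus ?thesis using tc[OF that(1) s n, of h] lo[of n s] n s by simp
      qed
    qed
    thus "(D1, D2) \<in> R" using that h unfolding R_def def_equiv_def A_def by auto
  qed
  have RA: "R \<subseteq> A \<times> A" unfolding R_def A_def def_equiv_def by auto
  have eqv: "equiv A R"
  proof (rule equivI)
    show "R \<subseteq> A \<times> A" by (rule RA)
    show "refl_on A R" unfolding refl_on_def
    proof (intro ballI)
      fix D assume D: "D \<in> A"
      show "(D, D) \<in> R" using char[OF D D] by (intro iffD2[OF char[OF D D]] exI[of _ "\<lambda>_. 0"]) auto
    qed
    show "sym R" unfolding sym_def
    proof (intro allI impI)
      fix D1 D2 assume r: "(D1, D2) \<in> R"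
      hence D: "D1 \<in> A" "D2 \<in> A" using RA by auto
      then obtain h where h: "h holomorphic_on U" and e: "\<forall>s\<in>U.
       fst D2 (Suc k) s = fst D1 (Suc k) s + h s * dz s \<and>
       snd D2 (Suc k) s = snd D1 (Suc k) s + h s * dw s" using char[OF D] r by blast
      show "(D2, D1) \<in> R"
        by (rule iffD2[OF char[OF D(2,1)]], rule exI[of _ "\<lambda>s. - h s"])
          (use h e in \<open>auto intro: holomorphic_intros\<close>)
    qed
    show "trans R" unfolding trans_def
    proof (intro allI impI)
      fix D1 D2 D3 assume r: "(D1, D2) \<in> R" "(D2, D3) \<in> R"
      hence D: "D1 \<in> A" "D2 \<in> A" "D3 \<in> A" using RA by auto
      obtain h where h: "h holomorphic_on U" and e: "\<forall>s\<in>U.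
       fst D2 (Suc k) s = fst D1 (Suc k) s + h s * dz s \<and>
       snd D2 (Suc k) s = snd D1 (Suc k) s + h s * dw s" using char[OF D(1,2)] r by blast
      obtain h' where h': "h' holomorphic_on U" and e': "\<forall>s\<in>U.
       fst D3 (Suc k) s = fst D2 (Suc k) s + h' s * dz s \<and>
       snd D3 (Suc k) s = snd D2 (Suc k) s + h' s * dw s" using char[OF D(2,3)] r by blast
      show "(D1, D3) \<in> R"
        by (rule iffD2[OF char[OF D(1,3)]], rule exI[of _ "\<lambda>s. h s + h' s"])
          (use h e h' e' in \<open>auto intro: holomorphic_intros simp: algebra_simps\<close>)
    qed
  qed
  define rep where "rep = (\<lambda>(gk1::complex\<Rightarrow>complex, q::complex poly).
     ((\<lambda>j. if j = Suc k then poly q else Zk j), (\<lambda>j. if j = Suc k then gk1 else Wk j)))"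
  have repA: "rep x \<in> A" if "x \<in> sections U a" for x
  proof -
    obtain gk1 q where x: "x = (gk1, q)" by fastforce
    have gh: "gk1 holomorphic_on U" using that x unfolding sections_def by auto
    show ?thesis unfolding rep_def x A_def local_defs_def
      using gh Zkh Wkh Zk0 by (auto intro: holomorphic_intros)
  qed
  have fun_eq: "(\<lambda>(gk1, q). def_equiv (ball 0 r) k Zk Wk ``
               {((\<lambda>j. if j = Suc k then poly q else Zk j),
                 (\<lambda>j. if j = Suc k then gk1 else Wk j))}) = (\<lambda>x. R `` {rep x})"
    unfolding R_def U_def rep_def by auto
  have bij: "bij_betw (\<lambda>x. R `` {rep x}) (sections U a) (A // R)"
  proof (rule bij_betwI')
    fix x y assume x: "x \<in> sections U a" and y: "y \<in> sections U a"
    show "(R `` {rep x} = R `` {rep y}) = (x = y)"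
    proof
      assume eq: "R `` {rep x} = R `` {rep y}"
      obtain g1 q1 where x': "x = (g1, q1)" by fastforce
      obtain g2 q2 where y': "y = (g2, q2)" by fastforce
      have r: "(rep x, rep y) \<in> R" by (rule eq_equiv_class[OF eq eqv repA[OF y]])
      then obtain h where h: "h holomorphic_on U" and e: "\<forall>s\<in>U.
       fst (rep y) (Suc k) s = fst (rep x) (Suc k) s + h s * dz s \<and>
       snd (rep y) (Suc k) s = snd (rep x) (Suc k) s + h s * dw s"
        using char[OF repA[OF x] repA[OF y]] by blast
      have e1: "\<forall>s\<in>ball 0 r. poly (q2 - q1) s = s ^ (a - 1) * (of_nat a * h s)"
        using e unfolding rep_def x' y' U_def by (auto simp: dzv algebra_simps)
      have hc: "continuous_on (ball 0 r) h" using h unfolding U_def by (rule holomorphic_on_imp_continuous_on)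
      have cv: "\<forall>i<a - 1. coeff (q2 - q1) i = 0"
        by (rule coeff_vanish[OF assms(1) _ e1]) (use hc in \<open>intro continuous_intros\<close>)
      have dg: "degree q1 \<le> a - 2" "degree q2 \<le> a - 2" using x y x' y' unfolding sections_def by auto
      have qq: "q1 = q2"
      proof (rule poly_eqI)
        fix i
        show "coeff q1 i = coeff q2 i"
        proof (cases "i < a - 1")
          case True thus ?thesis using cv by auto
        next
          case False
          hence "i > degree q1" "i > degree q2" using dg assms(2) by auto
          thus ?thesis by (simp add: coeff_eq_0)
        qed
      qed
      have hz: "h s = 0" if "s \<in> ball 0 r" "s \<noteq> 0" for s
        using e1[rule_format, OF that(1)] that(2) assms(2) qq by simp
      have h0: "h 0 = (\<lambda>_. 0) 0"
        by (rule eq_at0[OF hc _ assms(1)]) (use hz in auto)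
      have hall: "h s = 0" if "s \<in> U" for s
        using hz h0 that U_def by (cases "s = 0") auto
      have "g1 = g2"
      proof
        fix s show "g1 s = g2 s"
        proof (cases "s \<in> U")
          case True thus ?thesis using e hall unfolding rep_def x' y' by auto
        next
          case False thus ?thesis using x y unfolding x' y' sections_def by auto
        qed
      qed
      thus "x = y" using qq x' y' by simp
    qed simp
  next
    fix x assume "x \<in> sections U a"
    thus "R `` {rep x} \<in> A // R" by (intro quotientI repA)
  next
    fix X assume "X \<in> A // R"
    then obtain D where X: "X = R `` {D}" and D: "D \<in> A" by (rule quotientE)
    have Zh: "fst D (Suc k) holomorphic_on ball 0 r" using D unfolding A_def local_defs_def U_def by auto
    have Wh: "snd D (Suc k) holomorphic_on U" using D unfolding A_def local_defs_def by auto
    obtain q u where q: "\<forall>i\<ge>a - 1. coeff q i = 0" and u: "u holomorphic_on ball 0 r"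
      and e: "\<forall>s\<in>ball 0 r. fst D (Suc k) s = poly q s + s ^ (a - 1) * u s"
      using split_taylor[OF Zh assms(1)] by blast
    define h where "h = (\<lambda>s. u s / of_nat a)"
    define gg where "gg = (\<lambda>s. if s \<in> U then snd D (Suc k) s - h s * dw s else 0)"
    have hh: "h holomorphic_on U" unfolding h_def U_def using u by (intro holomorphic_intros) (use assms(2) in auto)
    have ggh: "gg holomorphic_on U"
      by (rule holomorphic_transform[of "\<lambda>s. snd D (Suc k) s - h s * dw s"])
        (use Wh hh dwh in \<open>auto intro!: holomorphic_intros simp: gg_def\<close>)
    have sec: "(gg, q) \<in> sections U a"
      unfolding sections_def using ggh q assms(2) by (auto intro!: degree_le simp: gg_def)
    have "(rep (gg, q), D) \<in> R"
    proof (rule iffD2[OF char[OF repA[OF sec] D]], intro exI conjI ballI)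
      show "h holomorphic_on U" by (rule hh)
      fix s assume s: "s \<in> U"
      have "of_nat a \<noteq> (0::complex)" using assms(2) by simp
      thus "fst D (Suc k) s = fst (rep (gg, q)) (Suc k) s + h s * dz s"
        using e s unfolding rep_def h_def U_def by (simp add: dzv field_simps)
      show "snd D (Suc k) s = snd (rep (gg, q)) (Suc k) s + h s * dw s"
        using s unfolding rep_def gg_def by simp
    qed
    hence "R `` {rep (gg, q)} = X" unfolding X by (rule equiv_class_eq[OF eqv])
    thus "\<exists>x\<in>sections U a. X = R `` {rep x}" using sec by blast
  qed
  show ?thesis
    unfolding fun_eq using eqv bij unfolding A_def R_def U_def by simp
qed

end
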